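(* Let $k\ge 1$ and let $L=(l_1,\ldots,l_k)$ be a sequence of positive integers, and let $S=S(L)$ be the spider defined by $L$. Let $t$ be an integer with $1\le t\le \alpha(S)$. Then for each $1\le i\le k$ and each $1\le j<l_i$ we have $$|\mathcal{I}^t_{v_{i,j}}(S)|\le |\mathcal{I}^t_{v_{i,l_i}}(S)|.$$
   Context: For a graph $G$, $\alpha(G)$ is the maximum size of an independent set in $G$, and for an integer $t\le\alpha(G)$, $\mathcal{I}^t(G)$ denotes the family of all independent sets of $G$ of size $t$. For a vertex $x$, $\mathcal{I}^t_x(G)$ denotes the subfamily of sets in $\mathcal{I}^t(G)$ containing $x$ (the star centered at $x$). Given a sequence of positive integers $L=(l_1,\ldots,l_k)$, the spider $S(L)$ is the tree consisting of a head vertex $v_0$ and, for each $1\le i\le k$, a leg which is the path $v_0,v_{i,1},v_{i,2},\ldots,v_{i,l_i}$; distinct legs share only $v_0$. *)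

theory Defs
  imports Main
begin

definition indep_set :: "'a set \<Rightarrow> ('a \<Rightarrow> 'a \<Rightarrow> bool) \<Rightarrow> 'a set \<Rightarrow> bool" where
  "indep_set V E A \<longleftrightarrow> A \<subseteq> V \<and> (\<forall>x\<in>A. \<forall>y\<in>A. \<not> E x y)"

text \<open>Independence number (V finite).\<close>
definition indep_number :: "'a set \<Rightarrow> ('a \<Rightarrow> 'a \<Rightarrow> bool) \<Rightarrow> nat" where
  "indep_number V E = Max (card ` {A. indep_set V E A})"

definition indep_family :: "'a set \<Rightarrow> ('a \<Rightarrow> 'a \<Rightarrow> bool) \<Rightarrow> nat \<Rightarrow> 'a set set" where
  "indep_family V E t = {A. indep_set V E A \<and> card A = t}"

definition indep_star :: "'a set \<Rightarrow> ('a \<Rightarrow> 'a \<Rightarrow> bool) \<Rightarrow> nat \<Rightarrow> 'a \<Rightarrow> 'a set set" where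
  "indep_star V E t x = {A \<in> indep_family V E t. x \<in> A}"

text \<open>Spider vertices: the head v_0, and Leg i j = v_{i,j} (1-based indices).\<close>
datatype spider_vertex = Head | Leg nat nat

text \<open>Spider S(L) for L = [l_1, ..., l_k]; leg i has length L ! (i - 1).\<close>
definition spider_vertices :: "nat list \<Rightarrow> spider_vertex set" where
  "spider_vertices L = insert Head {Leg i j | i j. 1 \<le> i \<and> i \<le> length L \<and> 1 \<le> j \<and> j \<le> L ! (i - 1)}"

definition spider_adj0 :: "nat list \<Rightarrow> spider_vertex \<Rightarrow> spider_vertex \<Rightarrow> bool" where
  "spider_adj0 L u v \<longleftrightarrow>
     (\<exists>i. 1 \<le> i \<and> i \<le> length L \<and> 1 \<le> L ! (i - 1) \<and> u = Head \<and> v = Leg i 1) \<or>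
     (\<exists>i j. 1 \<le> i \<and> i \<le> length L \<and> 1 \<le> j \<and> j + 1 \<le> L ! (i - 1) \<and> u = Leg i j \<and> v = Leg i (j + 1))"

definition spider_adj :: "nat list \<Rightarrow> spider_vertex \<Rightarrow> spider_vertex \<Rightarrow> bool" where
  "spider_adj L u v \<longleftrightarrow> spider_adj0 L u v \<or> spider_adj0 L v u"

end

theory Submission
  imports Defs
begin

definition sig :: "nat \<Rightarrow> nat \<Rightarrow> nat \<Rightarrow> spider_vertex \<Rightarrow> spider_vertex" where
  "sig i j l v = (case v of Head \<Rightarrow> Head | Leg a m \<Rightarrow>
      (if a = i \<and> j \<le> m \<and> m \<le> l then Leg i (j + l - m) else Leg a m))"

lemma sig_invol: "j \<le> l \<Longrightarrow> sig i j l (sig i j l v) = v"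
  by (cases v) (auto simp: sig_def)

lemma sig_adj:
  assumes "spider_adj L (sig i j l x) (sig i j l y)" "1 \<le> j" "j \<le> l" "l \<le> L ! (i - 1)" "L ! (i - 1) \<le> l"
  shows "spider_adj L x y \<or> x = Leg i l \<or> y = Leg i l"
  using assms
  apply (cases x; cases y)
  apply (auto simp: spider_adj_def spider_adj0_def sig_def split: if_splits)
  apply arith+
  done

lemma sig_V:
  assumes "x \<in> spider_vertices L" "1 \<le> j" "j \<le> l" "l = L ! (i - 1)" "1 \<le> i" "i \<le> length L"
  shows "sig i j l x \<in> spider_vertices L"
  using assms by (cases x) (auto simp: spider_vertices_def sig_def)

lemma sig_j: "j \<le> l \<Longrightarrow> sig i j l (Leg i j) = Leg i l"
  by (simp add: sig_def)

lemma sig_to_j: "j \<le> l \<Longrightarrow> sig i j l x = Leg i j \<Longrightarrow> x = Leg i l"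
  using sig_invol[of j l i x] sig_j[of j l i] by metis

lemma finite_V: "finite (spider_vertices L)"
proof -
  have "spider_vertices L \<subseteq> insert Head (case_prod Leg ` (SIGMA a:{..length L}. {..L!(a-1)}))"
    by (auto simp: spider_vertices_def)
  moreover have "finite (insert Head (case_prod Leg ` (SIGMA a:{..length L}. {..L!(a-1)})))"
    by auto
  ultimately show ?thesis by (rule finite_subset)
qed

theorem theorem2p1:
  fixes L :: "nat list" and t i j :: nat
  assumes "length L \<ge> 1"
    and "\<forall>l\<in>set L. l > 0"
    and "1 \<le> t" and "t \<le> indep_number (spider_vertices L) (spider_adj L)"
    and "1 \<le> i" and "i \<le> length L"
    and "1 \<le> j" and "j < L ! (i - 1)"
  shows "card (indep_star (spider_vertices L) (spider_adj L) t (Leg i j))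
         \<le> card (indep_star (spider_vertices L) (spider_adj L) t (Leg i (L ! (i - 1))))"
proof -
  define V where "V = spider_vertices L"
  define E where "E = spider_adj L"
  define l where "l = L ! (i - 1)"
  define s where "s = sig i j l"
  define f where "f = (\<lambda>A. if Leg i l \<in> A then A else s ` A)"
  have jl: "j < l" "j \<le> l" using assms l_def by auto
  have inv: "\<And>x. s (s x) = x" using sig_invol jl s_def by auto
  have injs: "inj_on s X" for X by (metis inv inj_onI)
  have fin: "finite (indep_star V E t (Leg i l))"
  proof (rule finite_subset)
    show "indep_star V E t (Leg i l) \<subseteq> Pow V"
      by (auto simp: indep_star_def indep_family_def indep_set_def)
    show "finite (Pow V)" using finite_V V_def by auto
  qed
  have maps: "f ` indep_star V E t (Leg i j) \<subseteq> indep_star V E t (Leg i l)"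
  proof
    fix B assume "B \<in> f ` indep_star V E t (Leg i j)"
    then obtain A where A: "A \<in> indep_star V E t (Leg i j)" and B: "B = f A" by auto
    have AV: "A \<subseteq> V" and Ai: "\<forall>x\<in>A. \<forall>y\<in>A. \<not> E x y" and Ac: "card A = t" and Aj: "Leg i j \<in> A"
      using A by (auto simp: indep_star_def indep_family_def indep_set_def)
    show "B \<in> indep_star V E t (Leg i l)"
    proof (cases "Leg i l \<in> A")
      case True
      then show ?thesis using A B f_def by (auto simp: indep_star_def)
    next
      case False
      have Bs: "B = s ` A" using False B f_def by simp
      have "s ` A \<subseteq> V" using AV sig_V[of _ L j l i] jl assms l_def s_def V_def by auto
      moreover have "\<forall>x\<in>s ` A. \<forall>y\<in>s ` A. \<not> E x y"
      proof (intro ballI)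
        fix x y assume "x \<in> s ` A" "y \<in> s ` A"
        then obtain x0 y0 where "x0 \<in> A" "y0 \<in> A" "x = s x0" "y = s y0" by auto
        then show "\<not> E x y"
          using sig_adj[of L i j l x0 y0] Ai False assms jl l_def s_def E_def by auto
      qed
      moreover have "card (s ` A) = t" using Ac card_image injs by auto
      moreover have "Leg i l \<in> s ` A" using rev_image_eqI[OF Aj, of "Leg i l" s] sig_j[OF jl(2)] s_def by simp
      ultimately show ?thesis using Bs by (auto simp: indep_star_def indep_family_def indep_set_def)
    qed
  qed
  have inj: "inj_on f (indep_star V E t (Leg i j))"
  proof (rule inj_onI)
    fix A B assume A: "A \<in> indep_star V E t (Leg i j)" and B: "B \<in> indep_star V E t (Leg i j)"
      and eq: "f A = f B"
    have Aj: "Leg i j \<in> A" "Leg i j \<in> B" using A B by (auto simp: indep_star_def)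
    have nj: "Leg i j \<notin> s ` X" if "Leg i l \<notin> X" for X
      using that sig_to_j[OF jl(2)] s_def by auto
    show "A = B"
    proof (cases "Leg i l \<in> A"; cases "Leg i l \<in> B")
      assume "Leg i l \<notin> A" "Leg i l \<notin> B"
      then have "s ` A = s ` B" using eq f_def by simp
      then have "s ` s ` A = s ` s ` B" by simp
      then show ?thesis using inv by (simp add: image_image)
    qed (use eq f_def Aj nj in auto)
  qed
  have "card (indep_star V E t (Leg i j)) \<le> card (indep_star V E t (Leg i l))"
    by (rule card_inj_on_le[OF inj maps fin])
  then show ?thesis using V_def E_def l_def by simp
qed

end
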